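(* Fix $d\ge 1$, a communication radius $r\in(0,1]$, a unit vector $w\in\mathbb{R}^d$, and $\epsilon,\delta\in(0,1)$. Then there exists $N_0$ such that for all $N\ge N_0$, with probability at least $1-\delta$ over the random positions of the $N$ sensors, the target configuration is an $\epsilon$-equilibrium of the sensor consensus game.
   Context: Sensors $1,\dots,N$ have positions $x_1,\dots,x_N$ drawn i.i.d. uniformly from the unit ball $\{x\in\mathbb{R}^d:\|x\|\le 1\}$. The target separator is the hyperplane $\{x: w\cdot x=0\}$ for a fixed unit vector $w$, and the target label of a point $x$ is $t(x)=\mathrm{sign}(w\cdot x)\in\{+1,-1\}$. Two distinct sensors $i\neq j$ are neighbors if $\|x_i-x_j\|\le r$. Each sensor is in a state in $\{+1,-1\}$. In the sensor consensus game, the payoff of a sensor $i$ with at least one neighbor is (number of neighbors in the same state as $i$ minus number of neighbors in the opposite state) divided by the number of neighbors of $i$. A configuration of states is an $\epsilon$-equilibrium if every sensor has at least one neighbor and no sensor can increase its payoff by more than $\epsilon$ by switching its own state (all other states fixed). The target configuration is the one in which each sensor $i$ is in state $t(x_i)$. *)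

theory Defs
  imports "HOL-Probability.Probability"
begin

definition neighbors :: "nat \<Rightarrow> real \<Rightarrow> (nat \<Rightarrow> 'a::euclidean_space) \<Rightarrow> nat \<Rightarrow> nat set" where
  "neighbors N r x i = {j \<in> {..<N}. j \<noteq> i \<and> dist (x i) (x j) \<le> r}"

text \<open>Payoff of sensor i in state configuration s (states in {1,-1}).\<close>
definition payoff :: "nat \<Rightarrow> real \<Rightarrow> (nat \<Rightarrow> 'a::euclidean_space) \<Rightarrow> (nat \<Rightarrow> int) \<Rightarrow> nat \<Rightarrow> real" where
  "payoff N r x s i =
     (real (card {j \<in> neighbors N r x i. s j = s i})
      - real (card {j \<in> neighbors N r x i. s j \<noteq> s i}))
     / real (card (neighbors N r x i))"

definition eps_equilibrium :: "nat \<Rightarrow> real \<Rightarrow> (nat \<Rightarrow> 'a::euclidean_space) \<Rightarrow> real \<Rightarrow> (nat \<Rightarrow> int) \<Rightarrow> bool" where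
  "eps_equilibrium N r x \<epsilon> s \<longleftrightarrow>
     (\<forall>i<N. neighbors N r x i \<noteq> {}) \<and>
     (\<forall>i<N. payoff N r x (s(i := - s i)) i \<le> payoff N r x s i + \<epsilon>)"

text \<open>Target label; points on the hyperplane (a null set) are labelled +1.\<close>
definition target_label :: "'a::euclidean_space \<Rightarrow> 'a \<Rightarrow> int" where
  "target_label w y = (if w \<bullet> y \<ge> 0 then 1 else -1)"

definition target_config :: "'a::euclidean_space \<Rightarrow> (nat \<Rightarrow> 'a) \<Rightarrow> nat \<Rightarrow> int" where
  "target_config w x = (\<lambda>i. target_label w (x i))"

definition sensor_measure :: "nat \<Rightarrow> (nat \<Rightarrow> 'a::euclidean_space) measure" where
  "sensor_measure N = PiM {..<N} (\<lambda>_. uniform_measure lborel (cball 0 1))"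

end

theory Submission
  imports Defs
begin

lemma isometry_measure_le:
  fixes f :: "'a::euclidean_space \<Rightarrow> 'a"
  assumes lin: "linear f" and iso: "\<And>x. norm (f x) = norm x" and S: "S \<in> lmeasurable"
  shows "measure lebesgue (f ` S) \<le> measure lebesgue S"
proof (rule field_le_epsilon)
  fix d :: real assume "d > 0"
  let ?\<mu> = "measure lebesgue"
  obtain T where T: "open T" "S \<subseteq> T" and TS: "(T-S) \<in> lmeasurable" and "emeasure lebesgue (T-S) < ennreal d"
    using S \<open>d > 0\<close> sets_lebesgue_outer_open by blast
  then have "?\<mu> (T-S) < d"
    by (metis emeasure_eq_measure2 ennreal_leI not_less)
  with S T TS have "T \<in> lmeasurable" and Tless: "?\<mu> T < ?\<mu> S + d"
    by (auto simp: measurable_measure_Diff dest!: fmeasurable_Diff_D)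
  have fdist: "dist (f x) (f y) = dist x y" for x y
    by (metis dist_norm iso lin linear_diff)
  have fball: "f ` ball x s \<subseteq> ball (f x) s" for x s
    using fdist by auto
  let ?K = "{(x,t) |x t. x \<in> S \<and> 0 < t \<and> ball x t \<subseteq> T}"
  obtain C where "countable C" and Csub: "C \<subseteq> ?K"
    and pwC: "pairwise (\<lambda>i j. disjnt (ball (fst i) (snd i)) (ball (fst j) (snd j))) C"
    and negC: "negligible(S - (\<Union>i \<in> C. ball (fst i) (snd i)))"
  proof (rule Vitali_covering_theorem_balls [of S ?K fst snd])
    fix x d assume "x \<in> S" "0 < (d::real)"
    obtain l where "l > 0" "ball x l \<subseteq> T" using \<open>x \<in> S\<close> T openE by blast
    then show "\<exists>i. i \<in> ?K \<and> x \<in> ball (fst i) (snd i) \<and> snd i < d"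
      using \<open>x \<in> S\<close> \<open>0 < d\<close>
      by (rule_tac x="(x, min l (d/2))" in exI) auto
  qed auto
  let ?U = "\<Union>i \<in> C. ball (f (fst i)) (snd i)"
  have bnd: "?\<mu> (\<Union>i\<in>K. ball (f (fst i)) (snd i)) \<le> ?\<mu> T" if "K \<subseteq> C" "finite K" for K
  proof -
    have "?\<mu> (\<Union>i\<in>K. ball (f (fst i)) (snd i)) \<le> (\<Sum>i\<in>K. ?\<mu> (ball (f (fst i)) (snd i)))"
      by (rule measure_UNION_le) (auto simp: that)
    also have "\<dots> = (\<Sum>i\<in>K. ?\<mu> (ball (fst i) (snd i)))"
    proof (rule sum.cong)
      fix i assume "i \<in> K"
      then have "snd i > 0" using that Csub by auto
      then show "?\<mu> (ball (f (fst i)) (snd i)) = ?\<mu> (ball (fst i) (snd i))"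
        by (simp add: content_ball)
    qed auto
    also have "\<dots> = ?\<mu> (\<Union>i\<in>K. ball (fst i) (snd i))"
    proof (rule measure_UNION'[symmetric])
      show "pairwise (\<lambda>i j. disjnt (ball (fst i) (snd i)) (ball (fst j) (snd j))) K"
        using pwC pairwise_subset that(1) by blast
    qed (use that in auto)
    also have "\<dots> \<le> ?\<mu> T"
      by (rule measure_mono_fmeasurable) (use that Csub \<open>T \<in> lmeasurable\<close> in \<open>fastforce+\<close>)
    finally show ?thesis .
  qed
  have Ufm: "?U \<in> lmeasurable" and Ule: "?\<mu> ?U \<le> ?\<mu> T"
    using bnd by (auto intro!: fmeasurable_UN_bound[OF \<open>countable C\<close>] measure_UN_bound[OF \<open>countable C\<close>])
  have negf: "negligible (f ` (S - (\<Union>i \<in> C. ball (fst i) (snd i))))"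
    by (rule negligible_differentiable_image_negligible[OF order_refl negC])
       (simp add: lin linear_imp_differentiable_on)
  have sub: "f ` S \<subseteq> ?U \<union> f ` (S - (\<Union>i \<in> C. ball (fst i) (snd i)))"
    using fball by blast
  have fS: "f ` S \<in> sets lebesgue"
    by (rule differentiable_image_in_sets_lebesgue) (use S lin in \<open>auto simp: linear_imp_differentiable_on\<close>)
  have fm2: "?U \<union> f ` (S - (\<Union>i \<in> C. ball (fst i) (snd i))) \<in> lmeasurable"
    using Ufm negf by (simp add: fmeasurable.Un negligible_imp_measurable)
  have "?\<mu> (f ` S) \<le> ?\<mu> (?U \<union> f ` (S - (\<Union>i \<in> C. ball (fst i) (snd i))))"
    by (rule measure_mono_fmeasurable[OF sub fS fm2])
  also have "\<dots> \<le> ?\<mu> ?U + ?\<mu> (f ` (S - (\<Union>i \<in> C. ball (fst i) (snd i))))"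
    by (rule measure_Un_le) (use Ufm negf in \<open>auto simp: negligible_imp_sets\<close>)
  also have "\<dots> = ?\<mu> ?U" using negf negligible_imp_measure0 by auto
  finally show "?\<mu> (f ` S) \<le> ?\<mu> S + d" using Ule Tless by linarith
qed

lemma reflect_ineq:
  fixes v a :: "'a::euclidean_space" and r :: real
  assumes v: "norm v = 1" and va: "v \<bullet> a \<ge> 0"
  shows "measure lebesgue (cball a r \<inter> cball 0 1 \<inter> {y. v \<bullet> y \<le> 0})
       \<le> measure lebesgue (cball a r \<inter> cball 0 1 \<inter> {y. v \<bullet> y \<ge> 0})"
proof -
  define R where "R = (\<lambda>y::'a. y - (2 * (v \<bullet> y)) *\<^sub>R v)"
  have vv: "v \<bullet> v = 1" using v by (simp add: norm_eq_1)
  have lin: "linear R" unfolding R_def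
    by (rule linearI) (auto simp: algebra_simps inner_add_right inner_scaleR_right)
  have Rv: "v \<bullet> R y = - (v \<bullet> y)" for y
    by (simp add: R_def inner_diff_right vv)
  have RR: "R (R y) = y" for y
  proof -
    have "R (R y) = R y - (2 * (v \<bullet> R y)) *\<^sub>R v" by (simp add: R_def)
    also have "\<dots> = R y + (2 * (v \<bullet> y)) *\<^sub>R v" by (simp add: Rv)
    also have "\<dots> = y" by (simp add: R_def)
    finally show ?thesis .
  qed
  have nR2: "(norm (R y - z))\<^sup>2 = (norm (y - z))\<^sup>2 + 4 * (v \<bullet> y) * (v \<bullet> z)" for y z
    by (simp add: R_def power2_norm_eq_inner inner_diff_left inner_diff_right vv
          inner_commute algebra_simps)
  have iso: "norm (R y) = norm y" for y
    using nR2[of y 0] by (simp add: power2_eq_iff_nonneg)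
  define X where "X = cball a r \<inter> cball 0 1 \<inter> {y. v \<bullet> y \<le> 0}"
  define Y where "Y = cball a r \<inter> cball 0 1 \<inter> {y. v \<bullet> y \<ge> 0}"
  have Xl: "X \<in> lmeasurable" unfolding X_def
    by (intro fmeasurable_Int_fmeasurable) (auto intro!: borel_closed closed_halfspace_le)
  have Yl: "Y \<in> lmeasurable" unfolding Y_def
    by (intro fmeasurable_Int_fmeasurable) (auto intro!: borel_closed closed_halfspace_ge)
  have sub: "R ` X \<subseteq> Y"
  proof
    fix z assume "z \<in> R ` X"
    then obtain y where y: "y \<in> X" "z = R y" by auto
    have "(norm (R y - a))\<^sup>2 \<le> (norm (y - a))\<^sup>2"
    proof -
      have "(v \<bullet> y) * (v \<bullet> a) \<le> 0"
        using y va unfolding X_def by (auto intro!: mult_nonpos_nonneg)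
      then show ?thesis using nR2[of y a] by linarith
    qed
    then have "norm (R y - a) \<le> norm (y - a)"
      using power2_le_imp_le by fastforce
    then show "z \<in> Y" using y iso Rv unfolding X_def Y_def
      by (auto simp: dist_norm norm_minus_commute)
  qed
  have RXs: "R ` X \<in> sets lebesgue"
    by (rule differentiable_image_in_sets_lebesgue) (use Xl lin in \<open>auto simp: linear_imp_differentiable_on\<close>)
  have RXl: "R ` X \<in> lmeasurable"
    using Yl sub RXs by (metis fmeasurableI2)
  have "measure lebesgue X = measure lebesgue (R ` (R ` X))"
    by (simp add: image_image RR)
  also have "\<dots> \<le> measure lebesgue (R ` X)"
    by (rule isometry_measure_le[OF lin iso RXl])
  also have "\<dots> \<le> measure lebesgue Y"
    by (rule measure_mono_fmeasurable[OF sub RXs Yl])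
  finally show ?thesis unfolding X_def Y_def .
qed

definition Yf :: "real \<Rightarrow> real \<Rightarrow> 'a::euclidean_space \<Rightarrow> 'a \<Rightarrow> 'a \<Rightarrow> real" where
  "Yf r \<epsilon> w a b = (if dist a b \<le> r then (if target_label w b = target_label w a then 1 else -1) + \<epsilon>/2 else 0)"

abbreviation U :: "'a::euclidean_space measure" where
  "U \<equiv> uniform_measure lborel (cball 0 1)"

lemma cball01_pos: "emeasure lborel (cball (0::'a::euclidean_space) 1) \<noteq> 0"
proof -
  have "unit_ball_vol (real DIM('a)) > 0" by (rule unit_ball_vol_pos) simp
  then have "unit_ball_vol (real DIM('a)) \<noteq> 0" by (metis less_irrefl)
  then show ?thesis by (simp add: emeasure_cball)
qed

lemma cball01_fin: "emeasure lborel (cball (0::'a::euclidean_space) 1) \<noteq> \<top>"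
  using emeasure_lborel_cball_finite[of "0::'a" 1] by auto

lemma prob_U: "prob_space (U :: 'a::euclidean_space measure)"
  by (rule prob_space_uniform_measure) (use cball01_pos cball01_fin in auto)

lemma measure_U: "A \<in> sets borel \<Longrightarrow> measure (U::'a::euclidean_space measure) A
   = measure lborel (cball 0 1 \<inter> A) / measure lborel (cball (0::'a) 1)"
  by (subst measure_uniform_measure) (auto simp: cball01_pos cball01_fin)

lemma target_label_measurable[measurable]:
  "(\<lambda>b. target_label w b) \<in> borel_measurable borel"
  unfolding target_label_def by measurable

lemma Yf_measurable[measurable]:
  fixes f g :: "'b \<Rightarrow> 'a::euclidean_space"
  assumes [measurable]: "f \<in> M \<rightarrow>\<^sub>M borel" "g \<in> M \<rightarrow>\<^sub>M borel"
  shows "(\<lambda>x. Yf r \<epsilon> w (f x) (g x)) \<in> borel_measurable M"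
  unfolding Yf_def target_label_def by measurable

lemma vol_lower:
  fixes a :: "'a::euclidean_space"
  assumes "norm a \<le> 1" "0 < r" "r \<le> 1"
  shows "measure lborel (cball 0 1 \<inter> cball a r) / measure lborel (cball (0::'a) 1) \<ge> (r/2) ^ DIM('a)"
proof -
  define z where "z = (1 - r/2) *\<^sub>R a"
  have sub: "ball z (r/2) \<subseteq> cball 0 1 \<inter> cball a r"
  proof
    fix y assume "y \<in> ball z (r/2)"
    then have y: "norm (y - z) < r/2" by (simp add: dist_norm norm_minus_commute)
    have "z - a = (- (r/2)) *\<^sub>R a" by (simp add: z_def algebra_simps)
    then have "norm (z - a) = (r/2) * norm a" using assms by simp
    also have "\<dots> \<le> r/2" using assms by (simp add: mult_left_le)
    finally have za: "norm (z - a) \<le> r/2" .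
    have "norm z = (1 - r/2) * norm a" using assms by (simp add: z_def)
    also have "\<dots> \<le> 1 - r/2" using assms by (simp add: mult_left_le)
    finally have zn: "norm z \<le> 1 - r/2" .
    have "norm (y - a) \<le> norm (y - z) + norm (z - a)"
      by (metis diff_add_cancel norm_triangle_ineq add_diff_eq)
    moreover have "norm y \<le> norm (y - z) + norm z"
      by (metis diff_add_cancel norm_triangle_ineq)
    ultimately show "y \<in> cball 0 1 \<inter> cball a r" using y za zn
      by (auto simp: dist_norm norm_minus_commute)
  qed
  have "measure lborel (ball z (r/2)) \<le> measure lborel (cball 0 1 \<inter> cball a r)"
  proof (rule measure_mono_fmeasurable[OF sub])
    have "cball (0::'a) 1 \<in> fmeasurable lborel"
      using emeasure_lborel_cball_finite[of "0::'a" 1] by (simp add: fmeasurable_def)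
    then show "cball 0 1 \<inter> cball a r \<in> fmeasurable lborel"
      by (rule fmeasurableI2) auto
  qed auto
  moreover have "measure lborel (ball z (r/2)) = unit_ball_vol DIM('a) * (r/2) ^ DIM('a)"
    using assms content_ball[of "r/2" z] by simp
  moreover have "measure lborel (cball (0::'a) 1) = unit_ball_vol DIM('a)"
    using content_cball[of 1 "0::'a"] by simp
  moreover have "unit_ball_vol DIM('a) > 0" by simp
  ultimately show ?thesis by (simp add: field_simps)
qed

lemma lbl_eq: "measure lborel A = measure lebesgue A" if "A \<in> sets borel"
  using that by simp

lemma halves_ineq:
  fixes w a :: "'a::euclidean_space" and r :: real
  assumes w: "norm w = 1"
  defines "P \<equiv> {b \<in> space borel. dist a b \<le> r \<and> target_label w b = target_label w a}"
  defines "Q \<equiv> {b \<in> space borel. dist a b \<le> r \<and> target_label w b \<noteq> target_label w a}"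
  shows "measure lebesgue (cball 0 1 \<inter> Q) \<le> measure lebesgue (cball 0 1 \<inter> P)"
proof -
  have Bl: "cball (0::'a) 1 \<inter> X \<in> lmeasurable" if "X \<in> sets borel" for X
  proof -
    have "cball (0::'a) 1 \<in> lmeasurable" by simp
    then show ?thesis by (rule fmeasurableI2) (use that in auto)
  qed
  have Ps: "P \<in> sets borel" unfolding P_def by measurable
  have Qs: "Q \<in> sets borel" unfolding Q_def by measurable
  show ?thesis
  proof (cases "w \<bullet> a \<ge> 0")
    case True
    have "measure lebesgue (cball 0 1 \<inter> Q) \<le> measure lebesgue (cball a r \<inter> cball 0 1 \<inter> {y. w \<bullet> y \<le> 0})"
      by (rule measure_mono_fmeasurable)
         (use True Qs Bl in \<open>auto simp: Q_def target_label_def intro!: fmeasurable_Int_fmeasurable borel_closed closed_halfspace_le split: if_splits\<close>)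
    also have "\<dots> \<le> measure lebesgue (cball a r \<inter> cball 0 1 \<inter> {y. w \<bullet> y \<ge> 0})"
      by (rule reflect_ineq[OF w True])
    also have "\<dots> \<le> measure lebesgue (cball 0 1 \<inter> P)"
      by (rule measure_mono_fmeasurable)
         (use True Ps Bl in \<open>auto simp: P_def target_label_def split: if_splits\<close>)
    finally show ?thesis .
  next
    case False
    have w': "norm (-w) = 1" using w by simp
    have F: "(-w) \<bullet> a \<ge> 0" using False by simp
    define H where "H = {y::'a. w \<bullet> y = 0}"
    have Hn: "negligible H" unfolding H_def using w by (intro negligible_hyperplane) auto
    have "measure lebesgue (cball 0 1 \<inter> Q) \<le> measure lebesgue (cball a r \<inter> cball 0 1 \<inter> {y. (-w) \<bullet> y \<le> 0})"
      by (rule measure_mono_fmeasurable)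
         (use False Qs Bl in \<open>auto simp: Q_def target_label_def intro!: fmeasurable_Int_fmeasurable borel_closed closed_halfspace_le split: if_splits\<close>)
    also have "\<dots> \<le> measure lebesgue (cball a r \<inter> cball 0 1 \<inter> {y. (-w) \<bullet> y \<ge> 0})"
      by (rule reflect_ineq[OF w' F])
    also have "\<dots> \<le> measure lebesgue ((cball 0 1 \<inter> P) \<union> H)"
      by (rule measure_mono_fmeasurable)
         (use False Ps Bl Hn in \<open>auto simp: P_def H_def target_label_def negligible_imp_measurable split: if_splits\<close>)
    also have "\<dots> \<le> measure lebesgue (cball 0 1 \<inter> P) + measure lebesgue H"
      by (rule measure_Un_le) (use Ps Bl Hn in \<open>auto simp: negligible_imp_sets\<close>)
    also have "measure lebesgue H = 0" using Hn negligible_imp_measure0 by blast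
    finally show ?thesis by simp
  qed
qed

lemma exp_lower:
  fixes w a :: "'a::euclidean_space"
  assumes w: "norm w = 1" and a: "norm a \<le> 1" and r: "0 < r" "r \<le> 1" and e: "0 < \<epsilon>"
  shows "(\<integral>b. Yf r \<epsilon> w a b \<partial>U) \<ge> \<epsilon>/2 * (r/2) ^ DIM('a)"
proof -
  interpret U: prob_space "U::'a measure" by (rule prob_U)
  define P where "P \<equiv> {b \<in> space (borel::'a measure). dist a b \<le> r \<and> target_label w b = target_label w a}"
  define Q where "Q \<equiv> {b \<in> space (borel::'a measure). dist a b \<le> r \<and> target_label w b \<noteq> target_label w a}"
  have Ps: "P \<in> sets borel" unfolding P_def by measurable
  have Qs: "Q \<in> sets borel" unfolding Q_def by measurable
  let ?V = "measure lborel (cball (0::'a) 1)"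
  have V: "?V > 0" using cball01_pos[where 'a='a] cball01_fin[where 'a='a]
    by (simp add: emeasure_eq_measure2 zero_less_measure_iff)
  have Yeq: "Yf r \<epsilon> w a b = (1 + \<epsilon>/2) * indicator P b + (\<epsilon>/2 - 1) * indicator Q b" for b
    by (auto simp: Yf_def P_def Q_def indicator_def)
  have "(\<integral>b. Yf r \<epsilon> w a b \<partial>U) = (\<integral>b. (1 + \<epsilon>/2) * indicator P b + (\<epsilon>/2 - 1) * indicator Q b \<partial>U)"
    by (simp add: Yeq)
  also have "\<dots> = (1 + \<epsilon>/2) * measure U P + (\<epsilon>/2 - 1) * measure U Q"
  proof -
    have "integrable U (indicator P :: 'a \<Rightarrow> real)" "integrable U (indicator Q :: 'a \<Rightarrow> real)"
    proof -
      have "P \<in> sets U" "Q \<in> sets U" using Ps Qs by auto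
      then show "integrable U (indicator P :: 'a \<Rightarrow> real)" "integrable U (indicator Q :: 'a \<Rightarrow> real)"
        using U.emeasure_finite[of P] U.emeasure_finite[of Q]
        by (auto intro!: integrable_real_indicator simp only: top.not_eq_extremum infinity_ennreal_def)
    qed
    then show ?thesis using Ps Qs by (subst Bochner_Integration.integral_add) auto
  qed
  finally have I: "(\<integral>b. Yf r \<epsilon> w a b \<partial>U) = (1 + \<epsilon>/2) * measure U P + (\<epsilon>/2 - 1) * measure U Q" .
  have PQ: "measure U Q \<le> measure U P"
    using halves_ineq[OF w, of a r] Ps Qs V
    by (simp add: measure_U P_def Q_def divide_right_mono)
  have "measure U (P \<union> Q) = measure U P + measure U Q"
    by (rule U.finite_measure_Union) (use Ps Qs in \<open>auto simp: P_def Q_def\<close>)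
  moreover have "P \<union> Q = cball a r" by (auto simp: P_def Q_def)
  moreover have "measure U (cball a r) \<ge> (r/2) ^ DIM('a)"
    using vol_lower[OF a r] by (simp add: measure_U)
  ultimately have "measure U P + measure U Q \<ge> (r/2) ^ DIM('a)" by simp
  then have "\<epsilon>/2 * (r/2) ^ DIM('a) \<le> \<epsilon>/2 * (measure U P + measure U Q)"
    using e by (intro mult_left_mono) auto
  moreover have "(1 + \<epsilon>/2) * measure U P + (\<epsilon>/2 - 1) * measure U Q
     = (measure U P - measure U Q) + \<epsilon>/2 * (measure U P + measure U Q)"
    by (simp add: algebra_simps)
  ultimately show ?thesis using I PQ by linarith
qed

lemma indep_coords:
  fixes M :: "'b measure"
  assumes M: "prob_space M" and I: "I \<noteq> {}"
  shows "prob_space.indep_vars (PiM I (\<lambda>_. M)) (\<lambda>_. M) (\<lambda>j x. x j) I"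
proof -
  interpret P: prob_space "PiM I (\<lambda>_. M)" by (rule prob_space_PiM) (rule M)
  show ?thesis
  proof (subst P.indep_vars_iff_distr_eq_PiM'[OF I])
    show "(\<lambda>x. x i) \<in> measurable (PiM I (\<lambda>_. M)) M" if "i \<in> I" for i
      using that by (rule measurable_component_singleton)
    have "distr (PiM I (\<lambda>_. M)) (PiM I (\<lambda>_. M)) (\<lambda>x. \<lambda>i\<in>I. x i)
        = distr (PiM I (\<lambda>_. M)) (PiM I (\<lambda>_. M)) (\<lambda>x. x)"
      by (rule distr_cong) (auto simp: space_PiM PiE_def extensional_restrict)
    also have "\<dots> = PiM I (\<lambda>_. M)" by simp
    also have "\<dots> = PiM I (\<lambda>i. distr (PiM I (\<lambda>_. M)) M (\<lambda>x. x i))"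
    proof (rule PiM_cong)
      fix i assume "i \<in> I"
      show "M = distr (PiM I (\<lambda>_. M)) M (\<lambda>x. x i)"
        by (rule sym, rule distr_PiM_component) (use M \<open>i \<in> I\<close> in auto)
    qed simp
    finally show "distr (PiM I (\<lambda>_. M)) (PiM I (\<lambda>_. M)) (\<lambda>x. \<lambda>i\<in>I. x i)
        = PiM I (\<lambda>i. distr (PiM I (\<lambda>_. M)) M (\<lambda>x. x i))" .
  qed
qed

lemma hoeff_bound:
  fixes w a :: "'a::euclidean_space" and I :: "'i set"
  assumes I: "finite I" "I \<noteq> {}" and w: "norm w = 1" and a: "norm a \<le> 1"
    and r: "0 < r" "r \<le> 1" and e: "0 < \<epsilon>" "\<epsilon> < 1"
  defines "\<mu> \<equiv> \<epsilon>/2 * (r/2) ^ DIM('a)"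
  shows "measure (PiM I (\<lambda>_. U)) {x \<in> space (PiM I (\<lambda>_. U)). (\<Sum>j\<in>I. Yf r \<epsilon> w a (x j)) \<le> 0}
       \<le> exp (- 2 * real (card I) * \<mu>\<^sup>2 / 9)"
proof -
  let ?P = "PiM I (\<lambda>_. U::'a measure)"
  interpret P: prob_space ?P by (rule prob_space_PiM) (rule prob_U)
  define X where "X = (\<lambda>j x. Yf r \<epsilon> w a ((x::'i \<Rightarrow> 'a) j))"
  have indep: "P.indep_vars (\<lambda>_. borel) X I"
    unfolding X_def
    by (rule P.indep_vars_compose2[OF indep_coords[OF prob_U I(2)]]) measurable
  have EX: "P.expectation (X j) \<ge> \<mu>" if "j \<in> I" for j
  proof -
    have "P.expectation (X j) = (\<integral>b. Yf r \<epsilon> w a b \<partial>distr ?P U (\<lambda>x. x j))"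
      unfolding X_def by (subst integral_distr) (use that in measurable)
    also have "\<dots> = (\<integral>b. Yf r \<epsilon> w a b \<partial>U)"
      by (subst distr_PiM_component) (use that prob_U in auto)
    finally show ?thesis using exp_lower[OF w a r e(1)] unfolding \<mu>_def by simp
  qed
  interpret H: Hoeffding_ineq ?P I X "\<lambda>_. -1" "\<lambda>_. 2" "\<Sum>j\<in>I. P.expectation (X j)"
  proof unfold_locales
    show "finite I" by (rule I)
    show "P.indep_vars (\<lambda>_. borel) X I" by (rule indep)
    show "AE x in ?P. X j x \<in> {-1..2}" if "j \<in> I" for j
      using e by (auto simp: X_def Yf_def)
  qed simp
  have "(\<Sum>j\<in>I. P.expectation (X j)) \<ge> (\<Sum>j\<in>I. \<mu>)"
    by (rule sum_mono) (rule EX)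
  then have Eg: "(\<Sum>j\<in>I. P.expectation (X j)) \<ge> real (card I) * \<mu>" by simp
  have cI: "real (card I) > 0" using I by (simp add: card_gt_0_iff)
  have mu0: "\<mu> \<ge> 0" using e r unfolding \<mu>_def by simp
  have "measure ?P {x \<in> space ?P. (\<Sum>j\<in>I. Yf r \<epsilon> w a (x j)) \<le> 0}
      \<le> measure ?P {x \<in> space ?P. (\<Sum>j\<in>I. X j x) \<le> (\<Sum>j\<in>I. P.expectation (X j)) - real (card I) * \<mu>}"
    by (rule P.finite_measure_mono) (use Eg in \<open>auto simp: X_def\<close>, measurable)
  also have "\<dots> \<le> exp (- 2 * (real (card I) * \<mu>)\<^sup>2 / (\<Sum>j\<in>I. (2 - (-1))\<^sup>2))"
    by (rule H.Hoeffding_ineq_le) (use cI mu0 in auto)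
  also have "(- 2 * (real (card I) * \<mu>)\<^sup>2 / (\<Sum>j\<in>I. (2 - (-1::real))\<^sup>2)) = - 2 * real (card I) * \<mu>\<^sup>2 / 9"
    using cI by (simp add: power2_eq_square field_simps)
  finally show ?thesis .
qed

lemma sensor_bound:
  fixes w :: "'a::euclidean_space"
  assumes N: "2 \<le> N" "i < N" and w: "norm w = 1"
    and r: "0 < r" "r \<le> 1" and e: "0 < \<epsilon>" "\<epsilon> < 1"
  defines "\<mu> \<equiv> \<epsilon>/2 * (r/2) ^ DIM('a)"
  shows "measure (PiM {..<N} (\<lambda>_. U)) {x \<in> space (PiM {..<N} (\<lambda>_. U::'a measure)).
            (\<Sum>j\<in>{..<N}-{i}. Yf r \<epsilon> w (x i) (x j)) \<le> 0}
       \<le> exp (- 2 * real (N - 1) * \<mu>\<^sup>2 / 9)"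
proof -
  define I where "I = {..<N} - {i}"
  have ins: "insert i I = {..<N}" using N by (auto simp: I_def)
  have fI: "finite I" and iI: "i \<notin> I" by (auto simp: I_def)
  have cI: "card I = N - 1" using N by (simp add: I_def)
  have neI: "I \<noteq> {}" using cI N by auto
  interpret PS: product_sigma_finite "\<lambda>_::nat. U::'a measure"
    by (simp add: product_sigma_finite_def prob_space_imp_sigma_finite prob_U)
  interpret P: prob_space "PiM {..<N} (\<lambda>_. U::'a measure)" by (rule prob_space_PiM) (rule prob_U)
  interpret U: prob_space "U::'a measure" by (rule prob_U)
  define B where "B = {x \<in> space (PiM (insert i I) (\<lambda>_. U::'a measure)).
            (\<Sum>j\<in>I. Yf r \<epsilon> w (x i) (x j)) \<le> 0}"
  define By where "By y = {x \<in> space (PiM I (\<lambda>_. U::'a measure)). (\<Sum>j\<in>I. Yf r \<epsilon> w y (x j)) \<le> 0}" for y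
  have Bm[measurable]: "B \<in> sets (PiM (insert i I) (\<lambda>_. U))" unfolding B_def by measurable
  have Bym: "By y \<in> sets (PiM I (\<lambda>_. U))" for y unfolding By_def by measurable
  let ?c = "exp (- 2 * real (N - 1) * \<mu>\<^sup>2 / 9)"
  have "emeasure (PiM (insert i I) (\<lambda>_. U)) B = (\<integral>\<^sup>+x. indicator B x \<partial>PiM (insert i I) (\<lambda>_. U))"
    by simp
  also have "\<dots> = (\<integral>\<^sup>+ y. (\<integral>\<^sup>+ x. indicator B (x(i := y)) \<partial>(PiM I (\<lambda>_. U))) \<partial>U)"
    by (rule PS.product_nn_integral_insert_rev[OF fI iI]) measurable
  also have "\<dots> = (\<integral>\<^sup>+ y. emeasure (PiM I (\<lambda>_. U)) (By y) \<partial>U)"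
  proof (rule nn_integral_cong)
    fix y :: 'a
    have "(\<integral>\<^sup>+ x. indicator B (x(i := y)) \<partial>(PiM I (\<lambda>_. U))) = (\<integral>\<^sup>+ x. indicator (By y) x \<partial>(PiM I (\<lambda>_. U)))"
    proof (rule nn_integral_cong)
      fix x assume x: "x \<in> space (PiM I (\<lambda>_. U::'a measure))"
      have "x(i := y) \<in> space (PiM (insert i I) (\<lambda>_. U::'a measure))"
        using x by (auto simp: space_PiM PiE_def extensional_def)
      moreover have "(\<Sum>j\<in>I. Yf r \<epsilon> w ((x(i := y)) i) ((x(i := y)) j)) = (\<Sum>j\<in>I. Yf r \<epsilon> w y (x j))"
        using iI by (intro sum.cong) auto
      ultimately show "indicator B (x(i := y)) = (indicator (By y) x :: ennreal)"
        using x by (auto simp: B_def By_def indicator_def)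
    qed
    also have "\<dots> = emeasure (PiM I (\<lambda>_. U)) (By y)" using Bym by simp
    finally show "(\<integral>\<^sup>+ x. indicator B (x(i := y)) \<partial>(PiM I (\<lambda>_. U))) = emeasure (PiM I (\<lambda>_. U)) (By y)" .
  qed
  finally have E1: "emeasure (PiM (insert i I) (\<lambda>_. U)) B = (\<integral>\<^sup>+ y. emeasure (PiM I (\<lambda>_. U)) (By y) \<partial>U)" .
  have AEb: "AE y in U. emeasure (PiM I (\<lambda>_. U)) (By y) \<le> ennreal ?c"
  proof -
    have "AE y in lborel. y \<in> cball 0 1 \<longrightarrow> emeasure (PiM I (\<lambda>_. U)) (By y) \<le> ennreal ?c"
    proof (rule AE_I2, rule impI)
      fix y :: 'a assume y: "y \<in> cball 0 1"
      interpret PI: prob_space "PiM I (\<lambda>_. U::'a measure)" by (rule prob_space_PiM) (rule prob_U)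
      have "measure (PiM I (\<lambda>_. U)) (By y) \<le> exp (- 2 * real (card I) * \<mu>\<^sup>2 / 9)"
        unfolding By_def \<mu>_def by (rule hoeff_bound[OF fI neI w _ r e]) (use y in simp)
      then show "emeasure (PiM I (\<lambda>_. U)) (By y) \<le> ennreal ?c"
        by (simp add: PI.emeasure_eq_measure cI)
    qed
    then show ?thesis
      by (intro AE_uniform_measureI) auto
  qed
  have "(\<integral>\<^sup>+ y. emeasure (PiM I (\<lambda>_. U)) (By y) \<partial>U) \<le> (\<integral>\<^sup>+ y. ennreal ?c \<partial>(U::'a measure))"
    using AEb by (rule nn_integral_mono_AE)
  also have "\<dots> = ennreal ?c" by (subst nn_integral_const) (simp only: U.emeasure_space_1 mult_1_right)
  finally have "emeasure (PiM {..<N} (\<lambda>_. U)) B \<le> ennreal ?c" using E1 by (simp add: ins)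
  then have "measure (PiM {..<N} (\<lambda>_. U)) B \<le> ?c"
    by (simp add: P.emeasure_eq_measure)
  then show ?thesis unfolding B_def ins unfolding I_def .
qed

lemma pay_char:
  fixes x :: "nat \<Rightarrow> 'a::euclidean_space" and w :: 'a
  assumes e: "0 < \<epsilon>" and i: "i < N" and ne: "neighbors N r x i \<noteq> {}"
  defines "s \<equiv> target_config w x"
  shows "payoff N r x (s(i := - s i)) i \<le> payoff N r x s i + \<epsilon> \<longleftrightarrow>
         0 \<le> (\<Sum>j\<in>{..<N}-{i}. Yf r \<epsilon> w (x i) (x j))"
proof -
  define S where "S = neighbors N r x i"
  have fS: "finite S" by (simp add: S_def neighbors_def)
  have iS: "i \<notin> S" by (simp add: S_def neighbors_def)
  have s1: "s j = 1 \<or> s j = -1" for j by (simp add: s_def target_config_def target_label_def)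
  define A where "A = {j\<in>S. s j = s i}"
  define Bo where "Bo = {j\<in>S. s j \<noteq> s i}"
  have n: "card S = card A + card Bo"
    unfolding A_def Bo_def using fS by (subst card_Un_disjoint[symmetric]) (auto intro!: arg_cong[where f=card])
  have npos: "real (card S) > 0" using ne fS by (simp add: S_def card_gt_0_iff)
  have p1: "payoff N r x s i = (real (card A) - real (card Bo)) / real (card S)"
    by (simp add: payoff_def A_def Bo_def S_def)
  have key: "s j = - s i \<longleftrightarrow> s j \<noteq> s i" for j
    using s1[of j] s1[of i] by auto
  have jne: "j \<in> S \<Longrightarrow> j \<noteq> i" for j using iS by blast
  have e1: "{j \<in> S. (s(i := - s i)) j = (s(i := - s i)) i} = Bo"
    unfolding Bo_def using jne key by auto
  have e2: "{j \<in> S. (s(i := - s i)) j \<noteq> (s(i := - s i)) i} = A"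
    unfolding A_def using jne key by auto
  have p2: "payoff N r x (s(i := - s i)) i = (real (card Bo) - real (card A)) / real (card S)"
    using e1 e2 by (simp add: payoff_def S_def)
  have "(\<Sum>j\<in>{..<N}-{i}. Yf r \<epsilon> w (x i) (x j))
      = (\<Sum>j\<in>{..<N}-{i}. if dist (x i) (x j) \<le> r then (if s j = s i then 1 else -1) + \<epsilon>/2 else 0)"
    unfolding s_def target_config_def Yf_def by simp
  also have "\<dots> = (\<Sum>j\<in>S. (if s j = s i then 1 else -1) + \<epsilon>/2)"
    by (subst sum.inter_filter[symmetric]) (auto simp: S_def neighbors_def intro!: sum.cong)
  also have "\<dots> = (\<Sum>j\<in>S. (if s j = s i then 1 else -1)) + \<epsilon>/2 * real (card S)"
    by (simp add: sum.distrib)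
  also have "(\<Sum>j\<in>S. (if s j = s i then 1 else -1::real)) = real (card A) - real (card Bo)"
    using fS by (simp add: sum.If_cases A_def Bo_def Int_def set_diff_eq)
  finally have sumeq: "(\<Sum>j\<in>{..<N}-{i}. Yf r \<epsilon> w (x i) (x j)) = real (card A) - real (card Bo) + \<epsilon>/2 * real (card S)" .
  define n where "n = real (card S)"
  define d where "d = real (card A) - real (card Bo)"
  have np: "n > 0" using npos by (simp add: n_def)
  have bd: "real (card Bo) - real (card A) = - d" by (simp add: d_def)
  have "(- d) / n \<le> d / n + \<epsilon>
      \<longleftrightarrow> (- d) / n * n \<le> (d / n + \<epsilon>) * n"
    by (rule mult_le_cancel_right_pos[OF np, symmetric])
  also have "\<dots> \<longleftrightarrow> - d \<le> d + \<epsilon> * n" using np by (simp add: distrib_right)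
  also have "\<dots> \<longleftrightarrow> 0 \<le> d + \<epsilon>/2 * n" by linarith
  finally show ?thesis unfolding p1 p2 sumeq n_def[symmetric] d_def[symmetric] bd .
qed

lemma eq_char:
  fixes x :: "nat \<Rightarrow> 'a::euclidean_space"
  assumes e: "0 < \<epsilon>"
  shows "eps_equilibrium N r x \<epsilon> (target_config w x) \<longleftrightarrow>
    (\<forall>i\<in>{..<N}. (\<exists>j\<in>{..<N}-{i}. dist (x i) (x j) \<le> r) \<and> 0 \<le> (\<Sum>j\<in>{..<N}-{i}. Yf r \<epsilon> w (x i) (x j)))"
proof -
  have ne: "neighbors N r x i \<noteq> {} \<longleftrightarrow> (\<exists>j\<in>{..<N}-{i}. dist (x i) (x j) \<le> r)" for i
    by (auto simp: neighbors_def)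
  show ?thesis
  proof
    assume L: "eps_equilibrium N r x \<epsilon> (target_config w x)"
    show "\<forall>i\<in>{..<N}. (\<exists>j\<in>{..<N}-{i}. dist (x i) (x j) \<le> r) \<and> 0 \<le> (\<Sum>j\<in>{..<N}-{i}. Yf r \<epsilon> w (x i) (x j))"
    proof
      fix i assume "i \<in> {..<N}"
      then have i: "i < N" by simp
      have n: "neighbors N r x i \<noteq> {}" using L i unfolding eps_equilibrium_def by blast
      have "payoff N r x ((target_config w x)(i := - target_config w x i)) i \<le> payoff N r x (target_config w x) i + \<epsilon>"
        using L i unfolding eps_equilibrium_def by blast
      then show "(\<exists>j\<in>{..<N}-{i}. dist (x i) (x j) \<le> r) \<and> 0 \<le> (\<Sum>j\<in>{..<N}-{i}. Yf r \<epsilon> w (x i) (x j))"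
        using pay_char[OF e i n, of w] n ne[of i] by blast
    qed
  next
    assume R: "\<forall>i\<in>{..<N}. (\<exists>j\<in>{..<N}-{i}. dist (x i) (x j) \<le> r) \<and> 0 \<le> (\<Sum>j\<in>{..<N}-{i}. Yf r \<epsilon> w (x i) (x j))"
    have n: "neighbors N r x i \<noteq> {}" if "i < N" for i using R that ne[of i] by auto
    show "eps_equilibrium N r x \<epsilon> (target_config w x)"
      unfolding eps_equilibrium_def
    proof (intro conjI allI impI)
      fix i assume i: "i < N"
      show "neighbors N r x i \<noteq> {}" by (rule n[OF i])
      show "payoff N r x ((target_config w x)(i := - target_config w x i)) i \<le> payoff N r x (target_config w x) i + \<epsilon>"
        using pay_char[OF e i n[OF i], of w] R i by auto
    qed
  qed
qed

lemma tail_bound: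
  assumes c: "c > 0" and N: "2 \<le> N"
  shows "real N * exp (- c * real (N - 1)) \<le> 8 / (c\<^sup>2 * real N)"
proof -
  have N1: "real (N - 1) \<ge> real N / 2" using N by (simp add: of_nat_diff)
  have x0: "c * real (N - 1) \<ge> 0" using c by simp
  have "exp (c * real (N - 1)) \<ge> 1 + c * real (N - 1) + (c * real (N - 1))\<^sup>2 / 2"
    by (rule exp_lower_Taylor_quadratic[OF x0])
  moreover have "(c * real (N - 1))\<^sup>2 \<ge> (c * (real N / 2))\<^sup>2"
    using N1 c N by (intro power_mono mult_left_mono) auto
  ultimately have E: "exp (c * real (N - 1)) \<ge> c\<^sup>2 * (real N)\<^sup>2 / 8"
    using x0 by (simp add: power_mult_distrib power_divide) 
  have Np: "real N > 0" using N by simp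
  have "real N * exp (- c * real (N - 1)) = real N / exp (c * real (N - 1))"
    by (simp add: exp_minus field_simps)
  also have "\<dots> \<le> real N / (c\<^sup>2 * (real N)\<^sup>2 / 8)"
    using E c Np by (intro divide_left_mono) auto
  also have "\<dots> = 8 / (c\<^sup>2 * real N)" using Np c by (simp add: field_simps power2_eq_square)
  finally show ?thesis .
qed

theorem lemma1:
  fixes w :: "'a::euclidean_space" and r \<epsilon> \<delta> :: real
  assumes "0 < r" "r \<le> 1" "norm w = 1"
    and "0 < \<epsilon>" "\<epsilon> < 1" "0 < \<delta>" "\<delta> < 1"
  shows "\<exists>N0. \<forall>N\<ge>N0.
           measure (sensor_measure N)
             {x \<in> space (sensor_measure N). eps_equilibrium N r x \<epsilon> (target_config w x)}
           \<ge> 1 - \<delta>"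
proof -
  note r = assms(1,2) and w = assms(3) and e = assms(4,5) and d = assms(6,7)
  define \<mu> where "\<mu> = \<epsilon>/2 * (r/2) ^ DIM('a)"
  define c where "c = 2 * \<mu>\<^sup>2 / 9"
  have mu: "\<mu> > 0" using r e by (simp add: \<mu>_def)
  have cpos: "c > 0" using mu by (simp add: c_def)
  have bound: "measure (sensor_measure N) {x \<in> space (sensor_measure N). eps_equilibrium N r x \<epsilon> (target_config w x)}
      \<ge> 1 - real N * exp (- c * real (N - 1))" if N: "2 \<le> N" for N
  proof -
    let ?M = "PiM {..<N} (\<lambda>_. U::'a measure)"
    have SM: "sensor_measure N = ?M" by (simp add: sensor_measure_def)
    interpret P: prob_space ?M by (rule prob_space_PiM) (rule prob_U)
    define G where "G = {x \<in> space ?M. eps_equilibrium N r x \<epsilon> (target_config w x)}"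
    have G: "G = {x \<in> space ?M. \<forall>i\<in>{..<N}. (\<exists>j\<in>{..<N}-{i}. dist (x i) (x j) \<le> r) \<and>
                   0 \<le> (\<Sum>j\<in>{..<N}-{i}. Yf r \<epsilon> w (x i) (x j))}"
      unfolding G_def using eq_char[OF e(1)] by blast
    have Gm: "G \<in> P.events" unfolding G by measurable
    define B where "B i = {x \<in> space ?M. (\<Sum>j\<in>{..<N}-{i}. Yf r \<epsilon> w (x i) (x j)) \<le> 0}" for i
    have Bm: "B i \<in> P.events" if "i \<in> {..<N}" for i
      using that unfolding B_def by measurable
    have sub: "space ?M - G \<subseteq> (\<Union>i\<in>{..<N}. B i)"
    proof
      fix x assume x: "x \<in> space ?M - G"
      then obtain i where i: "i \<in> {..<N}" and
        nq: "\<not> ((\<exists>j\<in>{..<N}-{i}. dist (x i) (x j) \<le> r) \<and> 0 \<le> (\<Sum>j\<in>{..<N}-{i}. Yf r \<epsilon> w (x i) (x j)))"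
        unfolding G by blast
      have "(\<Sum>j\<in>{..<N}-{i}. Yf r \<epsilon> w (x i) (x j)) \<le> 0"
      proof (cases "\<exists>j\<in>{..<N}-{i}. dist (x i) (x j) \<le> r")
        case True then show ?thesis using nq by simp
      next
        case False
        then have "(\<Sum>j\<in>{..<N}-{i}. Yf r \<epsilon> w (x i) (x j)) = 0"
          by (intro sum.neutral) (auto simp: Yf_def)
        then show ?thesis by simp
      qed
      then show "x \<in> (\<Union>i\<in>{..<N}. B i)" using x i by (auto simp: B_def)
    qed
    have "P.prob (space ?M - G) \<le> P.prob (\<Union>i\<in>{..<N}. B i)"
      by (rule P.finite_measure_mono[OF sub]) (use Bm in auto)
    also have "\<dots> \<le> (\<Sum>i\<in>{..<N}. P.prob (B i))"
      by (rule P.finite_measure_subadditive_finite) (use Bm in auto)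
    also have "\<dots> \<le> (\<Sum>i\<in>{..<N}. exp (- c * real (N - 1)))"
    proof (rule sum_mono)
      fix i assume "i \<in> {..<N}"
      then have "P.prob (B i) \<le> exp (- 2 * real (N - 1) * \<mu>\<^sup>2 / 9)"
        unfolding B_def \<mu>_def using sensor_bound[OF N _ w r e] by simp
      also have "- 2 * real (N - 1) * \<mu>\<^sup>2 / 9 = - c * real (N - 1)" by (simp add: c_def)
      finally show "P.prob (B i) \<le> exp (- c * real (N - 1))" .
    qed
    also have "\<dots> = real N * exp (- c * real (N - 1))" by (simp only: sum_constant card_lessThan)
    finally have "P.prob (space ?M - G) \<le> real N * exp (- c * real (N - 1))" .
    moreover have "P.prob (space ?M - G) = 1 - P.prob G" by (rule P.prob_compl[OF Gm])
    ultimately show ?thesis unfolding SM G_def[symmetric] by linarith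
  qed
  define N0 where "N0 = max 2 (nat \<lceil>8 / (c\<^sup>2 * \<delta>)\<rceil> + 1)"
  show ?thesis
  proof (intro exI allI impI)
    fix N assume N: "N0 \<le> N"
    then have N2: "2 \<le> N" by (simp add: N0_def)
    have "real N \<ge> 8 / (c\<^sup>2 * \<delta>)" using N unfolding N0_def by linarith
    moreover have cd: "c\<^sup>2 * \<delta> > 0" using cpos d by simp
    ultimately have "8 \<le> real N * (c\<^sup>2 * \<delta>)" by (simp add: pos_divide_le_eq)
    moreover have "c\<^sup>2 * real N > 0" using cpos N2 by simp
    ultimately have "8 / (c\<^sup>2 * real N) \<le> \<delta>" by (simp add: pos_divide_le_eq mult_ac)
    with tail_bound[OF cpos N2] bound[OF N2]
    show "measure (sensor_measure N) {x \<in> space (sensor_measure N). eps_equilibrium N r x \<epsilon> (target_config w x)}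
           \<ge> 1 - \<delta>" by linarith
  qed
qed

end
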